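(* For $\tau>0$ and $p\in M$ let $\zeta_\tau(p)=\frac{e^{-\varphi(p)^2/(2\tau^2)}}{\sqrt{2\pi}}G\!\left(\frac{d_p\varphi}{\tau}\right)\subset T_p^*M$. Then: (1) for all $p\in M$, $\zeta_\tau(p)\to\frac{1}{2\pi}B_M(p)$ as $\tau\to\infty$, where $B_M(p)\subset T_p^*M$ is the unit ball; (2) for all $p\in M\setminus Z_0$, $\zeta_\tau(p)\to\{0\}$ as $\tau\to0$; (3) for $p\in Z_0$, letting $\pi_p$ be the orthogonal projection of $T_p^*M$ onto the orthogonal complement of $d_p\varphi$ (identified with $T_p^*Z_0$), we have for all $\tau>0$: $\pi_p(\zeta_\tau(p))=\frac{1}{2\pi}B_{Z_0}(p)$, the unit ball of $T_p^*Z_0$ for the metric induced from $M$. Convergence is in the Hausdorff distance.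
   Context: $M$ is a smooth Riemannian manifold of dimension $m$; $T_p^*M$ carries the dual Euclidean structure. $\varphi\in C^\infty(M)$ is fixed and $Z_0:=\varphi^{-1}(0)$. For an integrable random vector $Y$ in a Euclidean space $E$, the Vitale zonoid $\mathbb{E}\underline{Y}$ is the convex body with support function $u\mapsto\frac12\mathbb{E}|\langle u,Y\rangle|$; for $c\in E$, $G(c):=\mathbb{E}\underline{c+\xi}$ with $\xi$ a standard Gaussian vector in $E$. (In the paper, $\zeta_\tau$ is the zonoid section of the random field $\varphi+\tau g$, $g$ a standard GRF inducing the metric.) *)

theory Defs
  imports "HOL-Analysis.Analysis"
begin

definition std_gauss_density :: "'a::euclidean_space \<Rightarrow> real" where
  "std_gauss_density x = (2 * pi) powr (- real DIM('a) / 2) * exp (- (norm x)\<^sup>2 / 2)"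

definition gauss_expect :: "('a::euclidean_space \<Rightarrow> real) \<Rightarrow> real" where
  "gauss_expect f = (LINT x|lborel. f x * std_gauss_density x)"

definition body_of_support :: "('a::euclidean_space \<Rightarrow> real) \<Rightarrow> 'a set" where
  "body_of_support h = {x. \<forall>u. u \<bullet> x \<le> h u}"

text \<open>G(c) = Vitale zonoid of c + xi, xi standard Gaussian:
  support function u |-> 1/2 E |<u, c + xi>|.\<close>
definition G_zonoid :: "'a::euclidean_space \<Rightarrow> 'a set" where
  "G_zonoid c = body_of_support (\<lambda>u. gauss_expect (\<lambda>x. \<bar>u \<bullet> (c + x)\<bar>) / 2)"

text \<open>zeta_tau(p), written pointwise with a = phi(p) and v = d_p phi in T_p^*M.\<close>
definition zeta :: "real \<Rightarrow> 'a::euclidean_space \<Rightarrow> real \<Rightarrow> 'a set" where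
  "zeta a v \<tau> = (\<lambda>x. (exp (- a\<^sup>2 / (2 * \<tau>\<^sup>2)) / sqrt (2 * pi)) *\<^sub>R x) ` G_zonoid ((1 / \<tau>) *\<^sub>R v)"

text \<open>Hausdorff distance between (nonempty bounded) sets.\<close>
definition hausdorff_dist :: "'a::metric_space set \<Rightarrow> 'a set \<Rightarrow> real" where
  "hausdorff_dist S T = max (SUP x\<in>S. infdist x T) (SUP y\<in>T. infdist y S)"

definition proj_perp :: "'a::euclidean_space \<Rightarrow> 'a \<Rightarrow> 'a" where
  "proj_perp v x = x - ((x \<bullet> v) / (v \<bullet> v)) *\<^sub>R v"

end

theory Submission
  imports Defs "HOL-Probability.Probability"
begin


abbreviation NN :: "real measure" where "NN \<equiv> density lborel std_normal_density"

lemma PiM_density_std: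
  fixes I :: "'i set" assumes I: "finite I"
  shows "density (PiM I (\<lambda>_. lborel)) (\<lambda>\<omega>. \<Prod>i\<in>I. ennreal (std_normal_density (\<omega> i))) = PiM I (\<lambda>_. NN)"
proof -
  interpret NP: product_sigma_finite "\<lambda>_::'i. NN"
    unfolding product_sigma_finite_def
    using prob_space_normal_density[of 1 0] prob_space_imp_sigma_finite by simp
  interpret LP: product_sigma_finite "\<lambda>_::'i. lborel :: real measure"
    unfolding product_sigma_finite_def by (simp add: lborel.sigma_finite_measure_axioms)
  show ?thesis
  proof (rule NP.PiM_eqI[OF I])
    show "sets (density (PiM I (\<lambda>_. lborel)) (\<lambda>\<omega>. \<Prod>i\<in>I. ennreal (std_normal_density (\<omega> i)))) = sets (PiM I (\<lambda>_. NN))"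
      unfolding sets_density by (intro sets_PiM_cong) (simp_all only: sets_density)
  next
    fix A assume A: "\<And>i. i \<in> I \<Longrightarrow> A i \<in> sets NN"
    have "emeasure (density (PiM I (\<lambda>_. lborel)) (\<lambda>\<omega>. \<Prod>i\<in>I. ennreal (std_normal_density (\<omega> i)))) (PiE I A)
        = (\<integral>\<^sup>+ \<omega>. (\<Prod>i\<in>I. ennreal (std_normal_density (\<omega> i))) * indicator (PiE I A) \<omega> \<partial>PiM I (\<lambda>_. lborel))"
      using A by (subst emeasure_density) (auto intro!: sets_PiM_I_finite I)
    also have "\<dots> = (\<integral>\<^sup>+ \<omega>. (\<Prod>i\<in>I. ennreal (std_normal_density (\<omega> i)) * indicator (A i) (\<omega> i)) \<partial>PiM I (\<lambda>_. lborel))"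
      by (intro nn_integral_cong) (auto simp: space_PiM indicator_def prod.distrib PiE_iff I)
    also have "\<dots> = (\<Prod>i\<in>I. \<integral>\<^sup>+ x. ennreal (std_normal_density x) * indicator (A i) x \<partial>lborel)"
      using A LP.product_nn_integral_prod[OF I, of "\<lambda>i x. ennreal (std_normal_density x) * indicator (A i) x"] by simp
    also have "\<dots> = (\<Prod>i\<in>I. emeasure NN (A i))"
      using A by (intro prod.cong refl) (simp add: emeasure_density)
    finally show "emeasure (density (PiM I (\<lambda>_. lborel)) (\<lambda>\<omega>. \<Prod>i\<in>I. ennreal (std_normal_density (\<omega> i)))) (PiE I A) = (\<Prod>i\<in>I. emeasure NN (A i))" .
  qed
qed



lemma inner_T: "b \<in> Basis \<Longrightarrow> (\<Sum>b'\<in>Basis. \<omega> b' *\<^sub>R b') \<bullet> (b::'a::euclidean_space) = \<omega> b"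
  by (simp add: inner_sum_left inner_Basis if_distrib sum.delta cong: if_cong)

lemma gauss_prod: "std_gauss_density (x::'a::euclidean_space) = (\<Prod>b\<in>Basis. std_normal_density (x \<bullet> b))"
proof -
  have "(norm x)\<^sup>2 = x \<bullet> x" by (rule power2_norm_eq_inner)
  also have "\<dots> = (\<Sum>b\<in>Basis. (x \<bullet> b)\<^sup>2)"
    by (subst euclidean_inner) (simp add: power2_eq_square)
  finally have n: "(norm x)\<^sup>2 = (\<Sum>b\<in>Basis. (x \<bullet> b)\<^sup>2)" .
  have "(1 / sqrt (2 * pi)) ^ DIM('a) = ((2 * pi) powr (- (1/2))) ^ DIM('a)"
    by (simp add: powr_minus_divide powr_half_sqrt)
  also have "\<dots> = (2 * pi) powr (real DIM('a) * (- (1/2)))"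
    by (rule powr_power) simp
  finally have p: "(2 * pi) powr (- real DIM('a) / 2) = (1 / sqrt (2 * pi)) ^ DIM('a)"
    by simp
  have "exp (- (norm x)\<^sup>2 / 2) = (\<Prod>b\<in>Basis. exp (- (x \<bullet> b)\<^sup>2 / 2))"
    unfolding n by (simp add: exp_sum[symmetric] sum_divide_distrib[symmetric] sum_negf)
  then show ?thesis
    unfolding std_gauss_density_def std_normal_density_def prod.distrib p
    by simp
qed

lemma gauss_meas[measurable]: "std_gauss_density \<in> borel_measurable borel"
  unfolding std_gauss_density_def by measurable

lemma T_meas[measurable]: "(\<lambda>\<omega>. \<Sum>b\<in>Basis. \<omega> b *\<^sub>R b) \<in> borel_measurable (PiM Basis (\<lambda>_::'a::euclidean_space. lborel))"
  by measurable

lemma T_meas2[measurable]: "(\<lambda>\<omega>. \<Sum>b\<in>Basis. \<omega> b *\<^sub>R b) \<in> borel_measurable (PiM Basis (\<lambda>_::'a::euclidean_space. NN))"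
  by measurable

lemma lborel_gauss:
  "density lborel (\<lambda>x::'a::euclidean_space. ennreal (std_gauss_density x))
     = distr (PiM Basis (\<lambda>_. NN)) borel (\<lambda>\<omega>. \<Sum>b\<in>Basis. \<omega> b *\<^sub>R b)"
proof -
  let ?T = "\<lambda>\<omega>. \<Sum>b\<in>Basis. \<omega> b *\<^sub>R (b::'a)"
  have "density lborel (\<lambda>x::'a. ennreal (std_gauss_density x))
      = density (distr (PiM Basis (\<lambda>_. lborel)) borel ?T) (\<lambda>x::'a. ennreal (std_gauss_density x))"
    by (simp only: lborel_eq[symmetric])
  also have "\<dots> = distr (density (PiM Basis (\<lambda>_. lborel)) (\<lambda>\<omega>. ennreal (std_gauss_density (?T \<omega>)))) borel ?T"
    by (rule density_distr) measurable
  also have "density (PiM Basis (\<lambda>_. lborel)) (\<lambda>\<omega>. ennreal (std_gauss_density (?T \<omega>)))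
      = density (PiM Basis (\<lambda>_. lborel)) (\<lambda>\<omega>. \<Prod>b\<in>Basis. ennreal (std_normal_density (\<omega> b)))"
  proof (rule density_cong)
    show "AE \<omega> in PiM Basis (\<lambda>_. lborel). ennreal (std_gauss_density (?T \<omega>)) = (\<Prod>b\<in>Basis. ennreal (std_normal_density (\<omega> b)))"
    proof (rule AE_I2)
      fix \<omega> :: "'a \<Rightarrow> real"
      have "std_gauss_density (?T \<omega>) = (\<Prod>b\<in>Basis. std_normal_density (\<omega> b))"
        unfolding gauss_prod by (intro prod.cong refl) (simp add: inner_T)
      then show "ennreal (std_gauss_density (?T \<omega>)) = (\<Prod>b\<in>Basis. ennreal (std_normal_density (\<omega> b)))"
        by (simp add: prod_ennreal)
    qed
  qed measurable
  also have "\<dots> = PiM Basis (\<lambda>_. NN)"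
    by (rule PiM_density_std) simp
  finally show ?thesis .
qed



lemma gauss_nonneg: "0 \<le> std_gauss_density x"
  unfolding std_gauss_density_def by simp

lemma gauss_expect_P:
  fixes f :: "'a::euclidean_space \<Rightarrow> real"
  assumes [measurable]: "f \<in> borel_measurable borel"
  shows "gauss_expect f = (\<integral>\<omega>. f (\<Sum>b\<in>Basis. \<omega> b *\<^sub>R b) \<partial>PiM Basis (\<lambda>_::'a. NN))"
proof -
  have "gauss_expect f = (\<integral>x. std_gauss_density x *\<^sub>R f x \<partial>lborel)"
    unfolding gauss_expect_def by (simp add: mult.commute)
  also have "\<dots> = integral\<^sup>L (density lborel (\<lambda>x. ennreal (std_gauss_density x))) f"
    by (rule integral_density[symmetric]) (auto simp: gauss_nonneg)
  also have "\<dots> = (\<integral>\<omega>. f (\<Sum>b\<in>Basis. \<omega> b *\<^sub>R b) \<partial>PiM Basis (\<lambda>_::'a. NN))"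
    unfolding lborel_gauss by (rule integral_distr) measurable
  finally show ?thesis .
qed

lemma prob_NN: "prob_space NN"
  using prob_space_normal_density[of 1 0] by simp

lemma prob_P: "prob_space (PiM (I::'i set) (\<lambda>_. NN))"
  by (rule prob_space_PiM) (rule prob_NN)

lemma coord_distr:
  assumes b: "(b::'i) \<in> I"
  shows "distributed (PiM I (\<lambda>_. NN)) lborel (\<lambda>\<omega>. \<omega> b) (\<lambda>x. ennreal (std_normal_density x))"
proof -
  have "distr (PiM I (\<lambda>_. NN)) lborel (\<lambda>\<omega>. \<omega> b) = distr (PiM I (\<lambda>_. NN)) NN (\<lambda>\<omega>. \<omega> b)"
    by (rule distr_cong) auto
  also have "\<dots> = NN"
    by (rule distr_PiM_component[OF prob_NN b])
  finally show ?thesis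
    unfolding distributed_def using b by auto
qed

lemma coord_indep:
  assumes fin: "finite (I::'i set)" and ne: "I \<noteq> {}"
  shows "prob_space.indep_vars (PiM I (\<lambda>_. NN)) (\<lambda>_. borel) (\<lambda>b \<omega>. \<omega> b) I"
proof -
  interpret P: prob_space "PiM I (\<lambda>_. NN)" by (rule prob_P)
  have rv: "(\<lambda>\<omega>. \<omega> i) \<in> measurable (PiM I (\<lambda>_. NN)) borel" if "i \<in> I" for i
  proof -
    have "measurable (PiM I (\<lambda>_. NN)) NN = measurable (PiM I (\<lambda>_. NN)) borel"
      by (rule measurable_cong_sets) auto
    then show ?thesis using measurable_component_singleton[OF that, of "\<lambda>_. NN"] by simp
  qed
  have "distr (PiM I (\<lambda>_. NN)) (PiM I (\<lambda>_. borel)) (\<lambda>x. \<lambda>i\<in>I. x i) = distr (PiM I (\<lambda>_. NN)) (PiM I (\<lambda>_. NN)) (\<lambda>x. x)"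
  proof (rule distr_cong)
    show "sets (PiM I (\<lambda>_. borel)) = sets (PiM I (\<lambda>_. NN))"
      by (intro sets_PiM_cong) auto
    show "\<And>x. x \<in> space (PiM I (\<lambda>_. NN)) \<Longrightarrow> (\<lambda>i\<in>I. x i) = x"
      by (auto simp: space_PiM PiE_def extensional_restrict)
  qed simp
  also have "\<dots> = PiM I (\<lambda>_. NN)" by (rule distr_id2) simp
  also have "\<dots> = PiM I (\<lambda>i. distr (PiM I (\<lambda>_. NN)) borel (\<lambda>\<omega>. \<omega> i))"
  proof (rule PiM_cong)
    fix i assume i: "i \<in> I"
    have "distr (PiM I (\<lambda>_. NN)) borel (\<lambda>\<omega>. \<omega> i) = distr (PiM I (\<lambda>_. NN)) NN (\<lambda>\<omega>. \<omega> i)"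
      by (rule distr_cong) auto
    also have "\<dots> = NN"
      by (rule distr_PiM_component[OF prob_NN i])
    finally show "NN = distr (PiM I (\<lambda>_. NN)) borel (\<lambda>\<omega>. \<omega> i)" by simp
  qed simp
  finally show ?thesis
    using P.indep_vars_iff_distr_eq_PiM'[OF ne rv] by simp
qed



lemma norm_sq_basis: "(norm (u::'a::euclidean_space))\<^sup>2 = (\<Sum>b\<in>Basis. (u \<bullet> b)\<^sup>2)"
proof -
  have "(norm u)\<^sup>2 = u \<bullet> u" by (rule power2_norm_eq_inner)
  also have "\<dots> = (\<Sum>b\<in>Basis. (u \<bullet> b)\<^sup>2)"
    by (subst euclidean_inner) (simp add: power2_eq_square)
  finally show ?thesis .
qed

lemma inner_distr:
  fixes u :: "'a::euclidean_space"
  assumes u: "u \<noteq> 0"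
  shows "distributed (PiM Basis (\<lambda>_::'a. NN)) lborel (\<lambda>\<omega>. u \<bullet> (\<Sum>b\<in>Basis. \<omega> b *\<^sub>R b))
           (\<lambda>x. ennreal (normal_density 0 (norm u) x))"
proof -
  interpret P: prob_space "PiM Basis (\<lambda>_::'a. NN)" by (rule prob_P)
  define B where "B = {b\<in>Basis. u \<bullet> b \<noteq> 0}"
  have finB: "finite B" unfolding B_def by simp
  have BB: "B \<subseteq> Basis" unfolding B_def by auto
  have neB: "B \<noteq> {}"
  proof
    assume "B = {}"
    then have "\<forall>b\<in>Basis. u \<bullet> b = 0" unfolding B_def by auto
    then have "u = 0" by (simp add: euclidean_all_zero_iff)
    with u show False by simp
  qed
  have eq: "(\<lambda>\<omega>. u \<bullet> (\<Sum>b\<in>Basis. \<omega> b *\<^sub>R b)) = (\<lambda>\<omega>. \<Sum>b\<in>B. (u \<bullet> b) * \<omega> b)"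
  proof
    fix \<omega> :: "'a \<Rightarrow> real"
    have "u \<bullet> (\<Sum>b\<in>Basis. \<omega> b *\<^sub>R b) = (\<Sum>b\<in>Basis. (u \<bullet> b) * \<omega> b)"
      by (simp add: inner_sum_right mult.commute)
    also have "\<dots> = (\<Sum>b\<in>B. (u \<bullet> b) * \<omega> b)"
      unfolding B_def by (rule sum.mono_neutral_right) auto
    finally show "u \<bullet> (\<Sum>b\<in>Basis. \<omega> b *\<^sub>R b) = (\<Sum>b\<in>B. (u \<bullet> b) * \<omega> b)" .
  qed
  have nu: "norm u = sqrt (\<Sum>b\<in>B. \<bar>u \<bullet> b\<bar>\<^sup>2)"
  proof -
    have "(\<Sum>b\<in>B. \<bar>u \<bullet> b\<bar>\<^sup>2) = (\<Sum>b\<in>Basis. (u \<bullet> b)\<^sup>2)"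
      unfolding B_def power2_abs by (rule sum.mono_neutral_left) auto
    then show ?thesis by (simp add: norm_sq_basis[symmetric])
  qed
  have ind: "P.indep_vars (\<lambda>_. borel) (\<lambda>b \<omega>. (u \<bullet> b) * \<omega> b) B"
  proof -
    have "P.indep_vars (\<lambda>_. borel) (\<lambda>b \<omega>. \<omega> b) B"
      using P.indep_vars_subset[OF coord_indep[OF finite_Basis nonempty_Basis] BB] .
    from P.indep_vars_compose2[OF this, of "\<lambda>b x. (u \<bullet> b) * x" "\<lambda>_. borel"]
    show ?thesis by simp
  qed
  have dist: "distributed (PiM Basis (\<lambda>_::'a. NN)) lborel (\<lambda>\<omega>. (u \<bullet> b) * \<omega> b) (\<lambda>x. ennreal (normal_density 0 \<bar>u \<bullet> b\<bar> x))"
    if "b \<in> B" for b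
  proof -
    have "u \<bullet> b \<noteq> 0" "b \<in> Basis" using that unfolding B_def by auto
    from P.normal_density_affine[OF coord_distr[OF \<open>b \<in> Basis\<close>] _ \<open>u \<bullet> b \<noteq> 0\<close>, of 0]
    show ?thesis by simp
  qed
  have "distributed (PiM Basis (\<lambda>_::'a. NN)) lborel (\<lambda>\<omega>. \<Sum>b\<in>B. (u \<bullet> b) * \<omega> b)
          (\<lambda>x. ennreal (normal_density (\<Sum>b\<in>B. 0) (sqrt (\<Sum>b\<in>B. \<bar>u \<bullet> b\<bar>\<^sup>2)) x))"
    by (rule P.sum_indep_normal[OF finB neB ind _ dist]) (auto simp: B_def)
  then show ?thesis unfolding eq nu by simp
qed

lemma gauss_expect_abs:
  fixes u c :: "'a::euclidean_space"
  assumes u: "u \<noteq> 0"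
  shows "gauss_expect (\<lambda>x. \<bar>u \<bullet> (c + x)\<bar>) = (\<integral>y. normal_density 0 (norm u) y * \<bar>u \<bullet> c + y\<bar> \<partial>lborel)"
proof -
  have "gauss_expect (\<lambda>x. \<bar>u \<bullet> (c + x)\<bar>) = (\<integral>\<omega>. \<bar>u \<bullet> c + u \<bullet> (\<Sum>b\<in>Basis. \<omega> b *\<^sub>R b)\<bar> \<partial>PiM Basis (\<lambda>_::'a. NN))"
    by (subst gauss_expect_P) (auto simp: inner_add_right)
  also have "\<dots> = (\<integral>y. normal_density 0 (norm u) y * \<bar>u \<bullet> c + y\<bar> \<partial>lborel)"
    by (rule distributed_integral[OF inner_distr[OF u], symmetric]) auto
  finally show ?thesis .
qed



lemma nd_abs_integrable: assumes s: "0 < \<sigma>" shows "integrable lborel (\<lambda>y. normal_density 0 \<sigma> y * \<bar>\<beta> + y\<bar>)"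
proof -
  have "integrable lborel (\<lambda>y. \<beta> * normal_density 0 \<sigma> y + normal_density 0 \<sigma> y * y)"
    using s by (intro Bochner_Integration.integrable_add integrable_mult_right integrable_normal_density integrable_normal_moment_nz_1)
  then have "integrable lborel (\<lambda>y. \<bar>\<beta> * normal_density 0 \<sigma> y + normal_density 0 \<sigma> y * y\<bar>)"
    by (rule integrable_abs)
  moreover have "\<bar>\<beta> * normal_density 0 \<sigma> y + normal_density 0 \<sigma> y * y\<bar> = normal_density 0 \<sigma> y * \<bar>\<beta> + y\<bar>" for y
  proof -
    have "\<beta> * normal_density 0 \<sigma> y + normal_density 0 \<sigma> y * y = normal_density 0 \<sigma> y * (\<beta> + y)"
      by (simp add: algebra_simps)
    then show ?thesis by (simp add: abs_mult)
  qed
  ultimately show ?thesis by simp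
qed

lemma nd_abs1_integrable: assumes s: "0 < \<sigma>" shows "integrable lborel (\<lambda>y. normal_density 0 \<sigma> y * \<bar>y\<bar>)"
  using nd_abs_integrable[OF s, of 0] by simp

lemma H0: assumes s: "0 < \<sigma>" shows "(\<integral>y. normal_density 0 \<sigma> y * \<bar>y\<bar> \<partial>lborel) = \<sigma> * sqrt (2 / pi)"
  using integral_normal_moment_abs_odd[of \<sigma> 0 0] s by simp

lemma H_upper: assumes s: "0 < \<sigma>" shows "(\<integral>y. normal_density 0 \<sigma> y * \<bar>\<beta> + y\<bar> \<partial>lborel) \<le> \<bar>\<beta>\<bar> + \<sigma> * sqrt (2 / pi)"
proof -
  have "(\<integral>y. normal_density 0 \<sigma> y * \<bar>\<beta> + y\<bar> \<partial>lborel) \<le> (\<integral>y. \<bar>\<beta>\<bar> * normal_density 0 \<sigma> y + normal_density 0 \<sigma> y * \<bar>y\<bar> \<partial>lborel)"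
  proof (rule integral_mono)
    show "integrable lborel (\<lambda>y. \<bar>\<beta>\<bar> * normal_density 0 \<sigma> y + normal_density 0 \<sigma> y * \<bar>y\<bar>)"
      by (intro Bochner_Integration.integrable_add integrable_mult_right integrable_normal_density nd_abs1_integrable s)
    fix y :: real
    have "normal_density 0 \<sigma> y * \<bar>\<beta> + y\<bar> \<le> normal_density 0 \<sigma> y * (\<bar>\<beta>\<bar> + \<bar>y\<bar>)"
      by (intro mult_left_mono abs_triangle_ineq) simp
    then show "normal_density 0 \<sigma> y * \<bar>\<beta> + y\<bar> \<le> \<bar>\<beta>\<bar> * normal_density 0 \<sigma> y + normal_density 0 \<sigma> y * \<bar>y\<bar>"
      by (simp add: algebra_simps)
  qed (rule nd_abs_integrable[OF s])
  also have "\<dots> = \<bar>\<beta>\<bar> + \<sigma> * sqrt (2 / pi)"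
    using s by (subst Bochner_Integration.integral_add) (auto intro!: integrable_mult_right nd_abs1_integrable s integrable_normal_density simp: H0[OF s])
  finally show ?thesis .
qed

lemma H_sym: "(\<integral>y. normal_density 0 \<sigma> y * \<bar>\<beta> + y\<bar> \<partial>lborel) = (\<integral>y. normal_density 0 \<sigma> y * \<bar>- \<beta> + y\<bar> \<partial>lborel)"
proof -
  have "(\<integral>y. normal_density 0 \<sigma> y * \<bar>\<beta> + y\<bar> \<partial>lborel) = \<bar>-1\<bar> *\<^sub>R (\<integral>y. normal_density 0 \<sigma> (0 + -1 * y) * \<bar>\<beta> + (0 + -1 * y)\<bar> \<partial>lborel)"
    by (rule lborel_integral_real_affine) simp
  also have "\<dots> = (\<integral>y. normal_density 0 \<sigma> y * \<bar>- \<beta> + y\<bar> \<partial>lborel)"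
  proof -
    have "normal_density 0 \<sigma> (0 + -1 * y) * \<bar>\<beta> + (0 + -1 * y)\<bar> = normal_density 0 \<sigma> y * \<bar>- \<beta> + y\<bar>" for y
      by (simp add: normal_density_def abs_minus_commute)
    then show ?thesis by simp
  qed
  finally show ?thesis .
qed

lemma H_lower: assumes s: "0 < \<sigma>" shows "\<sigma> * sqrt (2 / pi) \<le> (\<integral>y. normal_density 0 \<sigma> y * \<bar>\<beta> + y\<bar> \<partial>lborel)"
proof -
  have "2 * (\<sigma> * sqrt (2 / pi)) = (\<integral>y. 2 * (normal_density 0 \<sigma> y * \<bar>y\<bar>) \<partial>lborel)"
    using s by (simp add: H0)
  also have "\<dots> \<le> (\<integral>y. normal_density 0 \<sigma> y * \<bar>\<beta> + y\<bar> + normal_density 0 \<sigma> y * \<bar>- \<beta> + y\<bar> \<partial>lborel)"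
  proof (rule integral_mono)
    fix y :: real
    have "2 * \<bar>y\<bar> \<le> \<bar>\<beta> + y\<bar> + \<bar>- \<beta> + y\<bar>" by linarith
    then have "normal_density 0 \<sigma> y * (2 * \<bar>y\<bar>) \<le> normal_density 0 \<sigma> y * (\<bar>\<beta> + y\<bar> + \<bar>- \<beta> + y\<bar>)"
      by (intro mult_left_mono) simp_all
    then show "2 * (normal_density 0 \<sigma> y * \<bar>y\<bar>) \<le> normal_density 0 \<sigma> y * \<bar>\<beta> + y\<bar> + normal_density 0 \<sigma> y * \<bar>- \<beta> + y\<bar>"
      by (simp add: algebra_simps)
  qed (use nd_abs_integrable[OF s, of "- \<beta>"] in \<open>auto intro!: Bochner_Integration.integrable_add integrable_mult_right nd_abs1_integrable nd_abs_integrable s\<close>)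
  also have "\<dots> = 2 * (\<integral>y. normal_density 0 \<sigma> y * \<bar>\<beta> + y\<bar> \<partial>lborel)"
    by (subst Bochner_Integration.integral_add) (use nd_abs_integrable[OF s, of "- \<beta>"] in \<open>auto intro!: nd_abs_integrable s simp: H_sym[of \<sigma> \<beta>]\<close>)
  finally show ?thesis by simp
qed



definition hfun :: "'a::euclidean_space \<Rightarrow> 'a \<Rightarrow> real" where
  "hfun c u = gauss_expect (\<lambda>x. \<bar>u \<bullet> (c + x)\<bar>) / 2"

abbreviation KK :: real where "KK \<equiv> 1 / sqrt (2 * pi)"

lemma KK_eq: "sqrt (2 / pi) / 2 = KK"
proof -
  have s2: "sqrt 2 * sqrt 2 = (2::real)" by simp
  have "sqrt (2 / pi) / 2 = sqrt 2 / (sqrt pi * (sqrt 2 * sqrt 2))"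
    by (simp add: real_sqrt_divide s2)
  also have "\<dots> = KK"
    by (simp add: real_sqrt_mult field_simps)
  finally show ?thesis .
qed

lemma KK_pos: "0 < KK" by simp

lemma hfun_zero: "hfun c 0 = 0"
  by (simp add: hfun_def gauss_expect_def)

lemma hfun_lower: "KK * norm u \<le> hfun c u"
proof (cases "u = 0")
  case True then show ?thesis by (simp add: hfun_zero)
next
  case False
  then have "norm u * sqrt (2 / pi) \<le> gauss_expect (\<lambda>x. \<bar>u \<bullet> (c + x)\<bar>)"
    by (simp add: gauss_expect_abs H_lower)
  then have "norm u * (sqrt (2 / pi) / 2) \<le> hfun c u"
    unfolding hfun_def by simp
  then show ?thesis by (simp add: KK_eq mult.commute)
qed

lemma hfun_upper: "hfun c u \<le> KK * norm u + \<bar>u \<bullet> c\<bar> / 2"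
proof (cases "u = 0")
  case True then show ?thesis by (simp add: hfun_zero)
next
  case False
  then have "gauss_expect (\<lambda>x. \<bar>u \<bullet> (c + x)\<bar>) \<le> \<bar>u \<bullet> c\<bar> + norm u * sqrt (2 / pi)"
    by (simp add: gauss_expect_abs H_upper)
  then have "hfun c u \<le> \<bar>u \<bullet> c\<bar> / 2 + norm u * (sqrt (2 / pi) / 2)"
    unfolding hfun_def by simp
  then show ?thesis by (simp add: KK_eq mult.commute)
qed

lemma hfun_perp: "u \<bullet> c = 0 \<Longrightarrow> hfun c u = KK * norm u"
  using hfun_lower[of u c] hfun_upper[of c u] by simp

lemma G_zonoid_hfun: "G_zonoid c = {x. \<forall>u. u \<bullet> x \<le> hfun c u}"
  unfolding G_zonoid_def body_of_support_def hfun_def by simp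

lemma G_inner: "x \<in> G_zonoid c \<Longrightarrow> u \<bullet> x \<le> hfun c u"
  unfolding G_zonoid_hfun by simp

lemma G_ball: "cball 0 KK \<subseteq> G_zonoid c"
proof
  fix x :: 'a assume "x \<in> cball 0 KK"
  then have x: "norm x \<le> KK" by simp
  show "x \<in> G_zonoid c"
    unfolding G_zonoid_hfun
  proof (intro CollectI allI)
    fix u :: 'a
    have "u \<bullet> x \<le> norm u * norm x" by (rule norm_cauchy_schwarz)
    also have "\<dots> \<le> norm u * KK" by (intro mult_left_mono x) simp
    also have "\<dots> \<le> hfun c u" using hfun_lower[of u c] by (simp add: mult.commute)
    finally show "u \<bullet> x \<le> hfun c u" .
  qed
qed

lemma G_bound: "x \<in> G_zonoid c \<Longrightarrow> norm x \<le> KK + norm c / 2"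
proof -
  assume x: "x \<in> G_zonoid c"
  have "x \<bullet> x \<le> KK * norm x + \<bar>x \<bullet> c\<bar> / 2"
    using G_inner[OF x, of x] hfun_upper[of c x] by linarith
  also have "\<bar>x \<bullet> c\<bar> \<le> norm x * norm c" by (rule Cauchy_Schwarz_ineq2)
  finally have "norm x * norm x \<le> norm x * (KK + norm c / 2)"
    by (simp add: algebra_simps dot_square_norm power2_eq_square)
  then show ?thesis
    by (cases "norm x = 0") (auto simp: add_nonneg_nonneg)
qed

lemma G_perp: "x \<in> G_zonoid c \<Longrightarrow> w \<bullet> c = 0 \<Longrightarrow> w \<bullet> x \<le> KK * norm w"
  using G_inner[of x c w] hfun_perp[of w c] by simp

lemma G_zero: "G_zonoid 0 = cball 0 KK"
proof
  show "G_zonoid 0 \<subseteq> cball 0 KK" using G_bound[of _ 0] by auto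
qed (rule G_ball)



lemma hd_bound:
  fixes S T :: "'a::metric_space set"
  assumes "S \<noteq> {}" "T \<noteq> {}" "\<And>x. x \<in> S \<Longrightarrow> infdist x T \<le> e" "\<And>y. y \<in> T \<Longrightarrow> infdist y S \<le> e"
  shows "0 \<le> hausdorff_dist S T \<and> hausdorff_dist S T \<le> e"
proof -
  have b1: "bdd_above ((\<lambda>x. infdist x T) ` S)" by (rule bdd_aboveI2) (rule assms(3))
  have b2: "bdd_above ((\<lambda>y. infdist y S) ` T)" by (rule bdd_aboveI2) (rule assms(4))
  obtain x0 where "x0 \<in> S" using assms(1) by auto
  have "0 \<le> (SUP x\<in>S. infdist x T)"
    using cSUP_upper[OF \<open>x0 \<in> S\<close> b1] infdist_nonneg[of x0 T] by linarith
  moreover have "(SUP x\<in>S. infdist x T) \<le> e" by (rule cSUP_least[OF assms(1) assms(3)])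
  moreover have "(SUP y\<in>T. infdist y S) \<le> e" by (rule cSUP_least[OF assms(2) assms(4)])
  ultimately show ?thesis unfolding hausdorff_dist_def by simp
qed

lemma infdist_ball_le:
  fixes x :: "'a::real_normed_vector"
  assumes r: "0 \<le> r" and sub: "cball 0 r \<subseteq> S"
  shows "infdist x S \<le> max 0 (norm x - r)"
proof (cases "norm x \<le> r")
  case True
  then have "x \<in> S" using sub by (auto simp: mem_cball dist_norm)
  then have "infdist x S = 0" by (rule infdist_zero)
  then show ?thesis by simp
next
  case False
  then have nx: "norm x > 0" using r by linarith
  define y where "y = (r / norm x) *\<^sub>R x"
  have ny: "norm y = r" using nx r by (simp add: y_def)
  then have "y \<in> S" using sub by auto
  have "x - y = (1 - r / norm x) *\<^sub>R x" by (simp add: y_def algebra_simps)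
  then have "dist x y = \<bar>1 - r / norm x\<bar> * norm x" by (simp add: dist_norm)
  also have "\<dots> = norm x - r"
  proof -
    have "r / norm x \<le> 1" using nx False by simp
    then have "\<bar>1 - r / norm x\<bar> = 1 - r / norm x" by simp
    then show ?thesis using nx by (simp add: left_diff_distrib)
  qed
  finally have "infdist x S \<le> norm x - r" using infdist_le[OF \<open>y \<in> S\<close>, of x] by simp
  then show ?thesis by simp
qed

lemma lim_exp_top: "((\<lambda>\<tau>::real. exp (- a\<^sup>2 / (2 * \<tau>\<^sup>2))) \<longlongrightarrow> 1) at_top"
proof -
  have "LIM \<tau> at_top. (\<tau>::real)^2 :> at_top"
    by (intro filterlim_pow_at_top filterlim_ident) simp
  then have "((\<lambda>\<tau>::real. inverse (\<tau>^2)) \<longlongrightarrow> 0) at_top" by (rule tendsto_inverse_0_at_top)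
  then have l: "((\<lambda>\<tau>::real. exp (- a\<^sup>2 / 2 * inverse (\<tau>^2))) \<longlongrightarrow> exp (- a\<^sup>2 / 2 * 0)) at_top"
    by (intro tendsto_intros)
  have eq: "(\<lambda>\<tau>::real. exp (- a\<^sup>2 / 2 * inverse (\<tau>^2))) = (\<lambda>\<tau>::real. exp (- a\<^sup>2 / (2 * \<tau>\<^sup>2)))"
    by (simp only: divide_inverse inverse_mult_distrib mult.assoc)
  have "exp (- a\<^sup>2 / 2 * 0) = 1" by simp
  with l show ?thesis unfolding eq by simp
qed

lemma lim_inv_top: "((\<lambda>\<tau>::real. c / \<tau>) \<longlongrightarrow> 0) at_top"
  by (rule tendsto_divide_0[OF tendsto_const filterlim_at_top_imp_at_infinity[OF filterlim_ident]])

lemma exp_neg_le: assumes "0 < (z::real)" shows "exp (- z) \<le> 1 / z"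
proof -
  have "z \<le> exp z" using exp_ge_add_one_self[of z] by linarith
  then show ?thesis using assms by (simp add: exp_minus field_simps)
qed



lemma KK_sq: "KK * KK = 1 / (2 * pi)"
  by (simp add: real_sqrt_mult[symmetric])

lemma target_ball: "(\<lambda>x. (1 / (2 * pi)) *\<^sub>R x) ` cball (0::'a::euclidean_space) 1 = cball 0 (KK * KK)"
  using cball_scale[of "1 / (2 * pi)" "0::'a" 1] by (simp add: KK_sq)

lemma zeta_props:
  fixes v :: "'a::euclidean_space" and a :: real
  assumes t: "0 < \<tau>"
  defines "s \<equiv> exp (- a\<^sup>2 / (2 * \<tau>\<^sup>2)) / sqrt (2 * pi)"
  shows "cball 0 (s * KK) \<subseteq> zeta a v \<tau>"
    and "\<And>x. x \<in> zeta a v \<tau> \<Longrightarrow> norm x \<le> s * (KK + norm v / (2 * \<tau>))"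
    and "zeta a v \<tau> \<noteq> {}"
    and "0 < s" "s \<le> KK"
proof -
  show sp: "0 < s" unfolding s_def by simp
  show "s \<le> KK" unfolding s_def by (simp add: divide_right_mono)
  have z: "zeta a v \<tau> = (\<lambda>x. s *\<^sub>R x) ` G_zonoid ((1 / \<tau>) *\<^sub>R v)"
    unfolding zeta_def s_def ..
  have "cball 0 (s * KK) \<subseteq> zeta a v \<tau>"
  proof
    fix x :: 'a assume "x \<in> cball 0 (s * KK)"
    then have "norm x \<le> s * KK" by simp
    then have "norm ((1 / s) *\<^sub>R x) \<le> KK" using sp by (simp add: field_simps)
    then have "(1 / s) *\<^sub>R x \<in> cball 0 KK" by simp
    then have "(1 / s) *\<^sub>R x \<in> G_zonoid ((1 / \<tau>) *\<^sub>R v)" using G_ball[of "(1 / \<tau>) *\<^sub>R v"] by (rule subsetD[rotated])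
    moreover have "x = s *\<^sub>R ((1 / s) *\<^sub>R x)" using sp by simp
    ultimately show "x \<in> zeta a v \<tau>" unfolding z by blast
  qed
  then show sub: "cball 0 (s * KK) \<subseteq> zeta a v \<tau>" .
  have "(0::'a) \<in> cball 0 (s * KK)" using sp by simp
  then show "zeta a v \<tau> \<noteq> {}" using sub by blast
  fix x assume "x \<in> zeta a v \<tau>"
  then obtain y where y: "y \<in> G_zonoid ((1 / \<tau>) *\<^sub>R v)" and x: "x = s *\<^sub>R y" unfolding z by auto
  have "norm y \<le> KK + norm ((1 / \<tau>) *\<^sub>R v) / 2" by (rule G_bound[OF y])
  also have "\<dots> = KK + norm v / (2 * \<tau>)" using t by simp
  finally show "norm x \<le> s * (KK + norm v / (2 * \<tau>))"
    unfolding x using sp by (simp add: mult_left_mono)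
qed



lemma proj_scale: "proj_perp v (r *\<^sub>R x) = r *\<^sub>R proj_perp v x"
  unfolding proj_perp_def by (simp add: algebra_simps)

lemma proj_orth: "proj_perp v x \<bullet> v = 0"
proof (cases "v = 0")
  case True then show ?thesis by simp
next
  case False
  then have "v \<bullet> v \<noteq> 0" by simp
  then show ?thesis unfolding proj_perp_def by (simp add: inner_diff_left)
qed

lemma proj_self: "x \<bullet> v = 0 \<Longrightarrow> proj_perp v x = x"
  unfolding proj_perp_def by simp

lemma proj_inner: "proj_perp v x \<bullet> x = proj_perp v x \<bullet> proj_perp v x"
proof -
  define w where "w = proj_perp v x"
  have x: "x = w + ((x \<bullet> v) / (v \<bullet> v)) *\<^sub>R v" unfolding w_def proj_perp_def by simp
  have "w \<bullet> x = w \<bullet> w + ((x \<bullet> v) / (v \<bullet> v)) * (w \<bullet> v)"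
    by (subst x) (simp add: inner_add_right)
  also have "w \<bullet> v = 0" unfolding w_def by (rule proj_orth)
  finally show ?thesis unfolding w_def by simp
qed

lemma KK_aux: "r \<noteq> 0 \<Longrightarrow> (1/r)*(1/r)*(1/(1/r)) = 1/(r::real)"
  by (simp add: field_simps)

lemma KK_inv: "1 / (2 * pi) * (1 / KK) = KK"
  unfolding KK_sq[symmetric] by (rule KK_aux) simp

lemma part3:
  fixes v :: "'a::euclidean_space"
  assumes t: "0 < \<tau>"
  shows "proj_perp v ` zeta 0 v \<tau> = (\<lambda>x. (1 / (2 * pi)) *\<^sub>R x) ` (cball 0 1 \<inter> {x. x \<bullet> v = 0})"
proof -
  define c where "c = (1 / \<tau>) *\<^sub>R v"
  have z: "zeta 0 v \<tau> = (\<lambda>x. KK *\<^sub>R x) ` G_zonoid c"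
    unfolding zeta_def c_def by simp
  have KK2: "1 / (2 * pi) = KK * KK" by (simp add: KK_sq)
  show ?thesis
  proof
    show "proj_perp v ` zeta 0 v \<tau> \<subseteq> (\<lambda>x. (1 / (2 * pi)) *\<^sub>R x) ` (cball 0 1 \<inter> {x. x \<bullet> v = 0})"
    proof
      fix y assume "y \<in> proj_perp v ` zeta 0 v \<tau>"
      then obtain x where x: "x \<in> G_zonoid c" and y: "y = proj_perp v (KK *\<^sub>R x)" unfolding z by auto
      define w where "w = proj_perp v x"
      have wv: "w \<bullet> v = 0" unfolding w_def by (rule proj_orth)
      have nw: "norm w \<le> KK"
      proof (cases "v = 0")
        case True
        then have "w = x" "c = 0" unfolding w_def proj_perp_def c_def by simp_all
        then show ?thesis using G_bound[of x 0] x by simp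
      next
        case False
        have wc: "w \<bullet> c = 0" unfolding c_def using wv by simp
        have "norm w * norm w = w \<bullet> x" unfolding w_def proj_inner by (simp add: dot_square_norm power2_eq_square)
        also have "\<dots> \<le> KK * norm w" by (rule G_perp[OF x wc])
        finally have ineq: "norm w * norm w \<le> norm w * KK" by (simp add: mult.commute)
        show ?thesis
        proof (cases "norm w = 0")
          case True then show ?thesis by simp
        next
          case False
          then have "0 < norm w" by simp
          from mult_left_le_imp_le[OF ineq this] show ?thesis .
        qed
      qed
      have "y = KK *\<^sub>R w" unfolding y w_def by (rule proj_scale)
      also have "\<dots> = (1 / (2 * pi)) *\<^sub>R ((1 / KK) *\<^sub>R w)" by (simp only: scaleR_scaleR KK_inv)
      finally have y2: "y = (1 / (2 * pi)) *\<^sub>R ((1 / KK) *\<^sub>R w)" .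
      have "norm ((1 / KK) *\<^sub>R w) \<le> 1" using nw by (simp add: field_simps)
      moreover have "((1 / KK) *\<^sub>R w) \<bullet> v = 0" using wv by simp
      ultimately show "y \<in> (\<lambda>x. (1 / (2 * pi)) *\<^sub>R x) ` (cball 0 1 \<inter> {x. x \<bullet> v = 0})"
        unfolding y2 by (intro imageI) simp
    qed
  next
    show "(\<lambda>x. (1 / (2 * pi)) *\<^sub>R x) ` (cball 0 1 \<inter> {x. x \<bullet> v = 0}) \<subseteq> proj_perp v ` zeta 0 v \<tau>"
    proof
      fix y assume "y \<in> (\<lambda>x. (1 / (2 * pi)) *\<^sub>R x) ` (cball 0 1 \<inter> {x. x \<bullet> v = 0})"
      then obtain u where u1: "norm u \<le> 1" and uv: "u \<bullet> v = 0" and y: "y = (1 / (2 * pi)) *\<^sub>R u" by auto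
      have "norm (KK *\<^sub>R u) \<le> KK" using u1 by (simp add: divide_right_mono)
      then have "KK *\<^sub>R u \<in> cball 0 KK" by simp
      then have g: "KK *\<^sub>R u \<in> G_zonoid c" using G_ball[of c] by (rule subsetD[rotated])
      have p: "proj_perp v (KK *\<^sub>R (KK *\<^sub>R u)) = KK *\<^sub>R (KK *\<^sub>R u)"
        by (rule proj_self) (simp add: uv)
      have "y = (KK * KK) *\<^sub>R u" by (simp only: y KK2)
      then have y3: "y = KK *\<^sub>R (KK *\<^sub>R u)" by (simp only: scaleR_scaleR)
      have "y = proj_perp v (KK *\<^sub>R (KK *\<^sub>R u))" unfolding p by (rule y3)
      then show "y \<in> proj_perp v ` zeta 0 v \<tau>" unfolding z using g by blast
    qed
  qed
qed



lemma part1: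
  fixes v :: "'a::euclidean_space" and a :: real
  shows "((\<lambda>\<tau>. hausdorff_dist (zeta a v \<tau>) ((\<lambda>x. (1 / (2 * pi)) *\<^sub>R x) ` cball 0 1)) \<longlongrightarrow> 0) at_top"
proof -
  define S where "S \<tau> = exp (- a\<^sup>2 / (2 * \<tau>\<^sup>2)) / sqrt (2 * pi)" for \<tau> :: real
  define e where "e \<tau> = S \<tau> * (norm v / (2 * \<tau>)) + (KK * KK - S \<tau> * KK)" for \<tau>
  have bnd: "0 \<le> hausdorff_dist (zeta a v \<tau>) ((\<lambda>x. (1 / (2 * pi)) *\<^sub>R x) ` cball 0 1)
      \<and> hausdorff_dist (zeta a v \<tau>) ((\<lambda>x. (1 / (2 * pi)) *\<^sub>R x) ` cball 0 1) \<le> e \<tau>" if t: "0 < \<tau>" for \<tau>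
  proof -
    have Z1: "cball 0 (S \<tau> * KK) \<subseteq> zeta a v \<tau>" unfolding S_def by (rule zeta_props(1)[OF t])
    have Z2: "\<And>x. x \<in> zeta a v \<tau> \<Longrightarrow> norm x \<le> S \<tau> * (KK + norm v / (2 * \<tau>))"
      unfolding S_def by (rule zeta_props(2)[OF t])
    have Z3: "zeta a v \<tau> \<noteq> {}" by (rule zeta_props(3)[OF t])
    have Z4: "0 < S \<tau>" unfolding S_def by (rule zeta_props(4)[OF t])
    have Z5: "S \<tau> \<le> KK" unfolding S_def by (rule zeta_props(5)[OF t])
    note Z = Z1 Z2 Z3 Z4 Z5
    have sK: "S \<tau> * KK \<le> KK * KK" by (rule mult_right_mono[OF Z(5)]) simp
    have nn: "0 \<le> S \<tau> * (norm v / (2 * \<tau>))" using Z(4) t by simp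
    have KKn: "0 \<le> KK * KK" by simp
    show ?thesis unfolding target_ball
    proof (rule hd_bound)
      show "zeta a v \<tau> \<noteq> {}" by (rule Z(3))
      show "cball 0 (KK * KK) \<noteq> {}" using KKn by auto
    next
      fix x assume x: "x \<in> zeta a v \<tau>"
      have "infdist x (cball 0 (KK * KK)) \<le> max 0 (norm x - KK * KK)"
        by (rule infdist_ball_le[OF KKn]) simp
      moreover have "norm x \<le> S \<tau> * KK + S \<tau> * (norm v / (2 * \<tau>))"
        using Z(2)[OF x] by (simp add: distrib_left)
      ultimately show "infdist x (cball 0 (KK * KK)) \<le> e \<tau>"
        unfolding e_def using sK nn by linarith
    next
      fix y :: 'a assume y: "y \<in> cball 0 (KK * KK)"
      have "0 \<le> S \<tau> * KK" using Z(4) by simp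
      then have "infdist y (zeta a v \<tau>) \<le> max 0 (norm y - S \<tau> * KK)"
        by (rule infdist_ball_le[OF _ Z(1)])
      moreover have "norm y \<le> KK * KK" using y by simp
      ultimately show "infdist y (zeta a v \<tau>) \<le> e \<tau>"
        unfolding e_def using sK nn by linarith
    qed
  qed
  have lS: "(S \<longlongrightarrow> 1 / sqrt (2 * pi)) at_top"
    unfolding S_def by (intro tendsto_divide lim_exp_top tendsto_const) simp
  have lv: "((\<lambda>\<tau>::real. norm v / (2 * \<tau>)) \<longlongrightarrow> 0) at_top"
    using lim_inv_top[of "norm v / 2"] by simp
  have "(e \<longlongrightarrow> KK * 0 + (KK * KK - KK * KK)) at_top"
    unfolding e_def by (intro tendsto_intros lS lv)
  then have le: "(e \<longlongrightarrow> 0) at_top" by simp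
  show ?thesis
  proof (rule tendsto_sandwich[OF _ _ tendsto_const le])
    show "\<forall>\<^sub>F \<tau> in at_top. 0 \<le> hausdorff_dist (zeta a v \<tau>) ((\<lambda>x. (1 / (2 * pi)) *\<^sub>R x) ` cball 0 1)"
      using eventually_gt_at_top[of 0] by eventually_elim (use bnd in blast)
    show "\<forall>\<^sub>F \<tau> in at_top. hausdorff_dist (zeta a v \<tau>) ((\<lambda>x. (1 / (2 * pi)) *\<^sub>R x) ` cball 0 1) \<le> e \<tau>"
      using eventually_gt_at_top[of 0] by eventually_elim (use bnd in blast)
  qed
qed

lemma e_alg: "0 < (t::real) \<Longrightarrow> a \<noteq> 0 \<Longrightarrow> (2 * t\<^sup>2 / a\<^sup>2) * (K * (K + n / (2 * t))) = K * K * (2 * t\<^sup>2 / a\<^sup>2) + K * n * t / a\<^sup>2"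
  by (simp add: field_simps power2_eq_square)

lemma part2:
  fixes v :: "'a::euclidean_space" and a :: real
  assumes a: "a \<noteq> 0"
  shows "((\<lambda>\<tau>. hausdorff_dist (zeta a v \<tau>) {0}) \<longlongrightarrow> 0) (at_right 0)"
proof -
  define S where "S \<tau> = exp (- a\<^sup>2 / (2 * \<tau>\<^sup>2)) / sqrt (2 * pi)" for \<tau> :: real
  define e where "e \<tau> = KK * KK * (2 * \<tau>\<^sup>2 / a\<^sup>2) + KK * norm v * \<tau> / a\<^sup>2" for \<tau> :: real
  have a2: "0 < a\<^sup>2" using a by simp
  have bnd: "0 \<le> hausdorff_dist (zeta a v \<tau>) {0} \<and> hausdorff_dist (zeta a v \<tau>) {0} \<le> e \<tau>" if t: "0 < \<tau>" for \<tau>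
  proof -
    have Z1: "cball 0 (S \<tau> * KK) \<subseteq> zeta a v \<tau>" unfolding S_def by (rule zeta_props(1)[OF t])
    have Z2: "\<And>x. x \<in> zeta a v \<tau> \<Longrightarrow> norm x \<le> S \<tau> * (KK + norm v / (2 * \<tau>))"
      unfolding S_def by (rule zeta_props(2)[OF t])
    have Z3: "zeta a v \<tau> \<noteq> {}" by (rule zeta_props(3)[OF t])
    have Z4: "0 < S \<tau>" unfolding S_def by (rule zeta_props(4)[OF t])
    have Z5: "S \<tau> \<le> KK" unfolding S_def by (rule zeta_props(5)[OF t])
    note Z = Z1 Z2 Z3 Z4 Z5
    have E: "exp (- a\<^sup>2 / (2 * \<tau>\<^sup>2)) \<le> 2 * \<tau>\<^sup>2 / a\<^sup>2"
    proof -
      have "0 < a\<^sup>2 / (2 * \<tau>\<^sup>2)" using a2 t by simp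
      from exp_neg_le[OF this] show ?thesis by simp
    qed
    have bound: "S \<tau> * (KK + norm v / (2 * \<tau>)) \<le> e \<tau>"
    proof -
      have "S \<tau> * (KK + norm v / (2 * \<tau>)) = exp (- a\<^sup>2 / (2 * \<tau>\<^sup>2)) * (KK * (KK + norm v / (2 * \<tau>)))"
        by (simp only: S_def divide_inverse mult.assoc mult_1_left)
      also have "\<dots> \<le> (2 * \<tau>\<^sup>2 / a\<^sup>2) * (KK * (KK + norm v / (2 * \<tau>)))"
        by (rule mult_right_mono[OF E]) (use t in simp)
      also have "\<dots> = e \<tau>"
        unfolding e_def by (rule e_alg[OF t a])
      finally show ?thesis .
    qed
    have z0: "(0::'a) \<in> zeta a v \<tau>"
    proof -
      have "(0::'a) \<in> cball 0 (S \<tau> * KK)" using Z(4) by simp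
      then show ?thesis using Z(1) by blast
    qed
    show ?thesis
    proof (rule hd_bound)
      show "zeta a v \<tau> \<noteq> {}" by (rule Z(3))
      show "{0::'a} \<noteq> {}" by simp
    next
      fix x assume x: "x \<in> zeta a v \<tau>"
      have "infdist x {0} = norm x" by simp
      then show "infdist x {0} \<le> e \<tau>" using Z(2)[OF x] bound by linarith
    next
      fix y :: 'a assume "y \<in> {0}"
      then have "infdist y (zeta a v \<tau>) = 0" using z0 by simp
      moreover have "0 \<le> e \<tau>" using t unfolding e_def
        by (intro add_nonneg_nonneg mult_nonneg_nonneg divide_nonneg_nonneg) auto
      ultimately show "infdist y (zeta a v \<tau>) \<le> e \<tau>" by simp
    qed
  qed
  have "(e \<longlongrightarrow> KK * KK * (2 * 0\<^sup>2 / a\<^sup>2) + KK * norm v * 0 / a\<^sup>2) (at_right 0)"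
    unfolding e_def by (intro tendsto_intros tendsto_ident_at) (simp_all add: a)
  then have le: "(e \<longlongrightarrow> 0) (at_right 0)" by simp
  show ?thesis
  proof (rule tendsto_sandwich[OF _ _ tendsto_const le])
    show "\<forall>\<^sub>F \<tau> in at_right 0. 0 \<le> hausdorff_dist (zeta a v \<tau>) {0}"
      using eventually_at_right_less[of "0::real"] by eventually_elim (use bnd in blast)
    show "\<forall>\<^sub>F \<tau> in at_right 0. hausdorff_dist (zeta a v \<tau>) {0} \<le> e \<tau>"
      using eventually_at_right_less[of "0::real"] by eventually_elim (use bnd in blast)
  qed
qed


theorem proposition4p10:
  fixes a :: real and v :: "'a::euclidean_space"
  shows "((\<lambda>\<tau>. hausdorff_dist (zeta a v \<tau>) ((\<lambda>x. (1 / (2 * pi)) *\<^sub>R x) ` cball 0 1))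
            \<longlongrightarrow> 0) at_top
       \<and> (a \<noteq> 0 \<longrightarrow> ((\<lambda>\<tau>. hausdorff_dist (zeta a v \<tau>) {0}) \<longlongrightarrow> 0) (at_right 0))
       \<and> (a = 0 \<longrightarrow> (\<forall>\<tau>>0.
           proj_perp v ` zeta a v \<tau> =
           (\<lambda>x. (1 / (2 * pi)) *\<^sub>R x) ` (cball 0 1 \<inter> {x. x \<bullet> v = 0})))"
  using part1[of a v] part2[of a v] part3[of _ v] by blast

end
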